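(* Let $(B,\lfloor\cdot,\cdot\rfloor)$ be an SSD space with quadratic form $q$ and let $A\subset B$ be $q$-positive. Then: (1) $A\subset \mathcal{P}_q(\Phi_A^{@})\subset G_{\Phi_A}\subset A^{\pi}\cap \operatorname{conv}^w A$; (2) if $A$ is convex and $w(B,B)$-closed, then $A=G_{\Phi_A}$; (3) if $A$ is maximally $q$-positive, then $A=G_{\Phi_A}$.
   Context: An SSD space is a pair $(B,\lfloor\cdot,\cdot\rfloor)$ with $B$ a nonzero real vector space and $\lfloor\cdot,\cdot\rfloor$ a symmetric bilinear form; $q(b)=\frac12\lfloor b,b\rfloor$. $w(B,B)$ is the (possibly non-Hausdorff) weak topology on $B$, the coarsest topology making all maps $b\mapsto\lfloor b,c\rfloor$ ($c\in B$) continuous; $\operatorname{conv}^w A$ denotes the $w(B,B)$-closure of the convex hull of $A$. A nonempty $A\subset B$ is $q$-positive if $q(b-c)\ge0$ for all $b,c\in A$; maximally $q$-positive if $q$-positive and not properly contained in another $q$-positive set. $A^{\pi}:=\{b\in B: q(b-a)\ge0\ \forall a\in A\}$. $\Phi_A(x)=\sup_{a\in A}\{\lfloor x,a\rfloor-q(a)\}$. For proper convex $f:B\to\mathbb{R}\cup\{+\infty\}$, $f^{@}(b)=\sup_{c\in B}\{\lfloor c,b\rfloor-f(c)\}$, $\mathcal{P}_q(f)=\{b\in B: f(b)=q(b)\}$, and $G_f=\{b\in B: f(b)+f^{@}(b)=\lfloor b,b\rfloor\}$. *)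

theory Defs
  imports "HOL-Analysis.Analysis"
begin

definition SSD_space :: "('b::real_vector \<Rightarrow> 'b \<Rightarrow> real) \<Rightarrow> bool" where
  "SSD_space bf \<longleftrightarrow> (\<exists>x::'b. x \<noteq> 0) \<and> bilinear bf \<and> (\<forall>b c. bf b c = bf c b)"

definition qf :: "('b \<Rightarrow> 'b \<Rightarrow> real) \<Rightarrow> 'b \<Rightarrow> real" where
  "qf bf b = bf b b / 2"

definition weak_top :: "('b \<Rightarrow> 'b \<Rightarrow> real) \<Rightarrow> 'b topology" where
  "weak_top bf = topology_generated_by {{b. bf b c \<in> U} | c U. open U}"

definition conv_w :: "('b::real_vector \<Rightarrow> 'b \<Rightarrow> real) \<Rightarrow> 'b set \<Rightarrow> 'b set" where
  "conv_w bf A = (weak_top bf) closure_of (convex hull A)"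

definition q_positive :: "('b::real_vector \<Rightarrow> 'b \<Rightarrow> real) \<Rightarrow> 'b set \<Rightarrow> bool" where
  "q_positive bf A \<longleftrightarrow> A \<noteq> {} \<and> (\<forall>b\<in>A. \<forall>c\<in>A. qf bf (b - c) \<ge> 0)"

definition max_q_positive :: "('b::real_vector \<Rightarrow> 'b \<Rightarrow> real) \<Rightarrow> 'b set \<Rightarrow> bool" where
  "max_q_positive bf A \<longleftrightarrow> q_positive bf A \<and> (\<forall>A'. q_positive bf A' \<and> A \<subseteq> A' \<longrightarrow> A' = A)"

definition pi_set :: "('b::real_vector \<Rightarrow> 'b \<Rightarrow> real) \<Rightarrow> 'b set \<Rightarrow> 'b set" where
  "pi_set bf A = {b. \<forall>a\<in>A. qf bf (b - a) \<ge> 0}"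

definition Phi :: "('b \<Rightarrow> 'b \<Rightarrow> real) \<Rightarrow> 'b set \<Rightarrow> 'b \<Rightarrow> ereal" where
  "Phi bf A x = (SUP a\<in>A. ereal (bf x a - qf bf a))"

definition conj_at :: "('b \<Rightarrow> 'b \<Rightarrow> real) \<Rightarrow> ('b \<Rightarrow> ereal) \<Rightarrow> 'b \<Rightarrow> ereal" where
  "conj_at bf f b = (SUP c. ereal (bf c b) - f c)"

definition P_q :: "('b \<Rightarrow> 'b \<Rightarrow> real) \<Rightarrow> ('b \<Rightarrow> ereal) \<Rightarrow> 'b set" where
  "P_q bf f = {b. f b = ereal (qf bf b)}"

definition G_set :: "('b \<Rightarrow> 'b \<Rightarrow> real) \<Rightarrow> ('b \<Rightarrow> ereal) \<Rightarrow> 'b set" where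
  "G_set bf f = {b. f b + conj_at bf f b = ereal (bf b b)}"

end

theory Submission imports Defs begin
lemma gsep:
  fixes S :: "'v::real_vector set" and \<phi> :: "'i \<Rightarrow> 'v \<Rightarrow> real" and p :: "'i \<Rightarrow> real"
  assumes fin: "finite I" and cv: "convex S" and ne: "S \<noteq> {}"
   and aff: "\<And>i x y t. i \<in> I \<Longrightarrow> \<phi> i ((1-t) *\<^sub>R x + t *\<^sub>R y) = (1-t) * \<phi> i x + t * \<phi> i y"
   and dpos: "\<delta> > 0" and away: "\<And>x. x \<in> S \<Longrightarrow> \<exists>i\<in>I. \<delta> \<le> \<bar>\<phi> i x - p i\<bar>"
  shows "\<exists>w m. 0 < m \<and> (\<forall>x\<in>S. m \<le> (\<Sum>i\<in>I. w i * (\<phi> i x - p i)))"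
proof -
  define N where "N x = (\<Sum>i\<in>I. (\<phi> i x - p i)^2)" for x
  have Nge: "\<delta>^2 \<le> N x" if xS: "x \<in> S" for x
  proof -
    obtain i where i: "i\<in>I" "\<delta> \<le> \<bar>\<phi> i x - p i\<bar>" using away[OF xS] by blast
    have "\<delta>^2 \<le> (\<phi> i x - p i)^2" using i dpos
      by (metis abs_le_square_iff abs_of_pos)
    also have "\<dots> \<le> N x" unfolding N_def by (rule member_le_sum) (use i fin in auto)
    finally show ?thesis .
  qed
  define m0 where "m0 = Inf (N ` S)"
  have bdd: "bdd_below (N ` S)" using Nge by (meson bdd_belowI2)
  have m0le: "m0 \<le> N x" if "x\<in>S" for x unfolding m0_def using bdd that by (simp add: cInf_lower)
  have m0ge: "\<delta>^2 \<le> m0" unfolding m0_def using ne Nge by (simp add: cINF_greatest)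
  have "\<exists>x\<in>S. N x < m0 + 1/Suc k" for k
  proof -
    have "Inf (N ` S) < m0 + 1/Suc k" unfolding m0_def by simp
    then show ?thesis using cInf_less_iff[of "N ` S"] ne bdd by auto
  qed
  then obtain X where XS: "\<And>k. X k \<in> S" and XN: "\<And>k. N (X k) < m0 + 1/Suc k" by metis
  have par: "(\<Sum>i\<in>I. (\<phi> i x - \<phi> i y)^2) \<le> 2/Suc k + 2/Suc l"
    if "x \<in> S" "y \<in> S" "N x < m0 + 1/Suc k" "N y < m0 + 1/Suc l" for x y k l
  proof -
    define z where "z = (1 - 1/2) *\<^sub>R x + (1/2::real) *\<^sub>R y"
    have zS: "z \<in> S" unfolding z_def
      by (rule convex_alt[THEN iffD1, OF cv, rule_format]) (use that in auto)
    have phz: "\<phi> i z = (\<phi> i x + \<phi> i y)/2" if "i \<in> I" for i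
      using aff[OF that, where x=x and y=y and t="1/2"] unfolding z_def by simp
    have "(\<Sum>i\<in>I. (\<phi> i x - \<phi> i y)^2)
       = (\<Sum>i\<in>I. 2*(\<phi> i x - p i)^2 + 2*(\<phi> i y - p i)^2 - 4*(\<phi> i z - p i)^2)"
      by (rule sum.cong) (auto simp: phz power2_eq_square algebra_simps)
    also have "\<dots> = 2 * N x + 2 * N y - 4 * N z"
      unfolding N_def by (simp add: sum.distrib sum_subtractf sum_distrib_left)
    also have "\<dots> \<le> 2/Suc k + 2/Suc l"
    proof -
      have "2/real (Suc k) = 2 * (1/Suc k)" "2/real (Suc l) = 2 * (1/Suc l)" by simp_all
      then show ?thesis using m0le[OF zS] that(3,4) by linarith
    qed
    finally show ?thesis .
  qed
  have coordle: "(\<phi> i (X k) - \<phi> i (X l))^2 \<le> 2/Suc k + 2/Suc l" if "i \<in> I" for i k l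
  proof -
    have "(\<phi> i (X k) - \<phi> i (X l))^2 \<le> (\<Sum>i\<in>I. (\<phi> i (X k) - \<phi> i (X l))^2)"
      by (rule member_le_sum) (use that fin in auto)
    also have "\<dots> \<le> 2/Suc k + 2/Suc l" by (rule par[OF XS XS XN XN])
    finally show ?thesis .
  qed
  have cau: "Cauchy (\<lambda>k. \<phi> i (X k))" if iI: "i \<in> I" for i
  proof (rule metric_CauchyI)
    fix e :: real assume e: "0 < e"
    obtain M :: nat where M: "4 / e^2 < M" using reals_Archimedean2 by blast
    have M': "4 / Suc M < e^2"
    proof -
      have "0 < e^2" using e by simp
      then have "4 < M * e^2" using M by (simp add: pos_divide_less_eq)
      also have "\<dots> \<le> Suc M * e^2" using \<open>0 < e^2\<close> by (simp add: mult_right_mono)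
      finally show ?thesis using \<open>0 < e^2\<close> by (simp add: pos_divide_less_eq mult.commute)
    qed
    show "\<exists>M. \<forall>m\<ge>M. \<forall>n\<ge>M. dist (\<phi> i (X m)) (\<phi> i (X n)) < e"
    proof (intro exI allI impI)
      fix m n assume mn: "M \<le> m" "M \<le> n"
      have "2 / real (Suc m) \<le> 2 / Suc M" using mn by (simp add: frac_le)
      moreover have "2 / real (Suc n) \<le> 2 / Suc M" using mn by (simp add: frac_le)
      ultimately have "(\<phi> i (X m) - \<phi> i (X n))^2 < e^2"
        using coordle[OF iI, of m n] M' by linarith
      then have "\<bar>\<phi> i (X m) - \<phi> i (X n)\<bar> < e"
        using power_less_imp_less_base[of "\<bar>\<phi> i (X m) - \<phi> i (X n)\<bar>" 2 e] e by simp
      then show "dist (\<phi> i (X m)) (\<phi> i (X n)) < e" by (simp add: dist_real_def)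
    qed
  qed
  define L where "L i = lim (\<lambda>k. \<phi> i (X k))" for i
  have Lt: "(\<lambda>k. \<phi> i (X k)) \<longlonglongrightarrow> L i" if "i \<in> I" for i
    unfolding L_def using cau[OF that] by (simp add: Cauchy_convergent_iff convergent_LIMSEQ_iff)
  have NX1: "(\<lambda>k. N (X k)) \<longlonglongrightarrow> (\<Sum>i\<in>I. (L i - p i)^2)"
    unfolding N_def by (intro tendsto_intros Lt)
  have NX2: "(\<lambda>k. N (X k)) \<longlonglongrightarrow> m0"
  proof (rule real_tendsto_sandwich[where f="\<lambda>_. m0" and h="\<lambda>k. m0 + 1/Suc k"])
    show "\<forall>\<^sub>F n in sequentially. m0 \<le> N (X n)" using m0le XS by auto
    show "\<forall>\<^sub>F n in sequentially. N (X n) \<le> m0 + 1/Suc n"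
      by (rule always_eventually) (use XN less_imp_le in blast)
    show "(\<lambda>n. m0) \<longlonglongrightarrow> m0" by simp
    show "(\<lambda>n. m0 + 1 / real (Suc n)) \<longlonglongrightarrow> m0"
      using tendsto_add[OF tendsto_const[of m0] LIMSEQ_inverse_real_of_nat]
      by (simp add: inverse_eq_divide)
  qed
  have m0eq: "m0 = (\<Sum>i\<in>I. (L i - p i)^2)" using LIMSEQ_unique[OF NX2 NX1] .
  define w where "w i = L i - p i" for i
  have main: "m0 \<le> (\<Sum>i\<in>I. w i * (\<phi> i v - p i))" if vS: "v \<in> S" for v
  proof -
    define d where "d i = \<phi> i v - L i" for i
    have ineq: "m0 \<le> (\<Sum>i\<in>I. (w i + t * d i)^2)" if t: "0 < t" "t \<le> 1" for t
    proof -
      have lim: "(\<lambda>k. N ((1-t) *\<^sub>R X k + t *\<^sub>R v)) \<longlonglongrightarrow> (\<Sum>i\<in>I. ((1-t) * L i + t * \<phi> i v - p i)^2)"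
      proof -
        have "(\<lambda>k. (\<Sum>i\<in>I. ((1-t) * \<phi> i (X k) + t * \<phi> i v - p i)^2)) \<longlonglongrightarrow> (\<Sum>i\<in>I. ((1-t) * L i + t * \<phi> i v - p i)^2)"
          by (intro tendsto_intros Lt)
        moreover have "N ((1-t) *\<^sub>R X k + t *\<^sub>R v) = (\<Sum>i\<in>I. ((1-t) * \<phi> i (X k) + t * \<phi> i v - p i)^2)" for k
          unfolding N_def by (rule sum.cong) (auto simp: aff)
        ultimately show ?thesis by simp
      qed
      have "m0 \<le> (\<Sum>i\<in>I. ((1-t) * L i + t * \<phi> i v - p i)^2)"
      proof (rule LIMSEQ_le_const[OF lim], intro exI allI impI)
        fix k :: nat
        have "(1-t) *\<^sub>R X k + t *\<^sub>R v \<in> S" using cv XS vS t unfolding convex_alt by auto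
        then show "m0 \<le> N ((1-t) *\<^sub>R X k + t *\<^sub>R v)" by (rule m0le)
      qed
      also have "\<dots> = (\<Sum>i\<in>I. (w i + t * d i)^2)"
        by (rule sum.cong) (auto simp: w_def d_def algebra_simps)
      finally show ?thesis .
    qed
    define Sd where "Sd = (\<Sum>i\<in>I. w i * d i)"
    define D where "D = (\<Sum>i\<in>I. (d i)^2)"
    have Dge: "0 \<le> D" unfolding D_def by (simp add: sum_nonneg)
    have expand: "(\<Sum>i\<in>I. (w i + t * d i)^2) = m0 + 2 * t * Sd + t^2 * D" for t
    proof -
      have "(\<Sum>i\<in>I. (w i + t * d i)^2) = (\<Sum>i\<in>I. (w i)^2 + 2 * t * (w i * d i) + t^2 * (d i)^2)"
        by (rule sum.cong) (auto simp: power2_eq_square algebra_simps)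
      also have "\<dots> = (\<Sum>i\<in>I. (w i)^2) + 2 * t * Sd + t^2 * D"
        unfolding Sd_def D_def by (simp add: sum.distrib sum_distrib_left)
      finally show ?thesis using m0eq w_def by simp
    qed
    have Sd0: "0 \<le> Sd"
    proof (rule ccontr)
      assume "\<not> 0 \<le> Sd"
      then have neg: "Sd < 0" by simp
      define t where "t = min 1 (- Sd / (D + 1))"
      have "0 < - Sd / (D + 1)" using neg Dge by (intro divide_pos_pos) auto
      then have t0: "0 < t" unfolding t_def by simp
      have t1: "t \<le> 1" unfolding t_def by simp
      have "t * D \<le> (- Sd / (D + 1)) * D" unfolding t_def using Dge by (intro mult_right_mono) auto
      also have "\<dots> = - Sd * (D / (D + 1))" by simp
      also have "\<dots> < - Sd * 1" using neg Dge by (intro mult_strict_left_mono) auto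
      also have "\<dots> = - Sd" by simp
      finally have tD: "t * D < - Sd" .
      have "m0 \<le> m0 + 2 * t * Sd + t^2 * D" using ineq[OF t0 t1] expand by simp
      then have "0 \<le> t * (2 * Sd + t * D)" by (simp add: power2_eq_square algebra_simps)
      then have "0 \<le> 2 * Sd + t * D" using t0 by (simp add: zero_le_mult_iff)
      then show False using tD neg by linarith
    qed
    have "(\<Sum>i\<in>I. w i * (\<phi> i v - p i)) = (\<Sum>i\<in>I. w i * d i + (w i)^2)"
      by (rule sum.cong) (auto simp: w_def d_def power2_eq_square algebra_simps)
    also have "\<dots> = Sd + m0" unfolding Sd_def using m0eq w_def by (simp add: sum.distrib)
    finally show ?thesis using Sd0 by simp
  qed
  have "0 < \<delta>^2" using dpos by simp
  then have "0 < m0" using m0ge by linarith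
  then show ?thesis using main by blast
qed

locale ssdl =
  fixes bf :: "'b::real_vector \<Rightarrow> 'b \<Rightarrow> real"
  assumes bil: "bilinear bf" and sym: "\<And>b c. bf b c = bf c b"
begin

lemma ladd[simp]: "bf (x + y) z = bf x z + bf y z" using bilinear_ladd[OF bil] .
lemma radd[simp]: "bf x (y + z) = bf x y + bf x z" using bilinear_radd[OF bil] .
lemma lsub[simp]: "bf (x - y) z = bf x z - bf y z" using bilinear_lsub[OF bil] .
lemma rsub[simp]: "bf z (x - y) = bf z x - bf z y" using bilinear_rsub[OF bil] .
lemma lmul[simp]: "bf (c *\<^sub>R x) y = c * bf x y" using bilinear_lmul[OF bil] by simp
lemma rmul[simp]: "bf x (c *\<^sub>R y) = c * bf x y" using bilinear_rmul[OF bil] by simp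
lemma lneg[simp]: "bf (- x) y = - bf x y" using bilinear_lneg[OF bil] .
lemma rneg[simp]: "bf x (- y) = - bf x y" using bilinear_rneg[OF bil] .
lemma lzero[simp]: "bf 0 y = 0" using bilinear_lzero[OF bil] by simp
lemma rzero[simp]: "bf x 0 = 0" using bilinear_rzero[OF bil] by simp
lemma rsum: "finite C \<Longrightarrow> bf x (\<Sum>c\<in>C. w c *\<^sub>R c) = (\<Sum>c\<in>C. w c * bf x c)"
  by (induct C rule: finite_induct) simp_all

lemma q_diff: "qf bf (x - y) = qf bf x - bf x y + qf bf y"
  unfolding qf_def using sym[of y x] by (simp add: field_simps)

end

locale ssdA = ssdl bf for bf :: "'b::real_vector \<Rightarrow> 'b \<Rightarrow> real" +
  fixes A :: "'b set"
  assumes qp: "q_positive bf A"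
begin

lemma A_ne: "A \<noteq> {}" using qp unfolding q_positive_def by simp
lemma qpos: "a \<in> A \<Longrightarrow> a' \<in> A \<Longrightarrow> 0 \<le> qf bf (a - a')"
  using qp unfolding q_positive_def by simp

lemma Phi_ge: "a \<in> A \<Longrightarrow> ereal (bf x a - qf bf a) \<le> Phi bf A x"
  unfolding Phi_def by (rule SUP_upper)
lemma Phi_le: "(\<And>a. a \<in> A \<Longrightarrow> bf x a - qf bf a \<le> r) \<Longrightarrow> Phi bf A x \<le> ereal r"
  unfolding Phi_def by (rule SUP_least) simp
lemma Phi_not_minf: "Phi bf A x \<noteq> -\<infinity>"
proof -
  obtain a where "a \<in> A" using A_ne by blast
  from Phi_ge[OF this, of x] show ?thesis by auto
qed
lemma Phi_realD: "Phi bf A c = ereal r \<Longrightarrow> a \<in> A \<Longrightarrow> bf c a - qf bf a \<le> r"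
  using Phi_ge[of a c] by simp

lemma conj_ge: "ereal (bf c b) - Phi bf A c \<le> conj_at bf (Phi bf A) b"
  unfolding conj_at_def by (rule SUP_upper) simp

lemma conj_ge': "Phi bf A c \<le> ereal r \<Longrightarrow> ereal (bf c b - r) \<le> conj_at bf (Phi bf A) b"
proof -
  assume h: "Phi bf A c \<le> ereal r"
  then obtain r' where r': "Phi bf A c = ereal r'" "r' \<le> r"
    using Phi_not_minf by (cases "Phi bf A c") auto
  have "ereal (bf c b - r) \<le> ereal (bf c b) - Phi bf A c" using r' by simp
  also have "\<dots> \<le> conj_at bf (Phi bf A) b" by (rule conj_ge)
  finally show ?thesis .
qed

lemma conj_le_gen:
  assumes "\<And>c r. Phi bf A c = ereal r \<Longrightarrow> bf c x - r \<le> M"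
  shows "conj_at bf (Phi bf A) x \<le> ereal M"
  unfolding conj_at_def
proof (rule SUP_least)
  fix c
  show "ereal (bf c x) - Phi bf A c \<le> ereal M"
  proof (cases "Phi bf A c")
    case (real r) then show ?thesis using assms[OF real] by simp
  next
    case PInf then show ?thesis by simp
  next
    case MInf then show ?thesis using Phi_not_minf by simp
  qed
qed

lemma conj_le_A: "a \<in> A \<Longrightarrow> conj_at bf (Phi bf A) a \<le> ereal (qf bf a)"
  by (rule conj_le_gen) (drule Phi_realD, auto)

lemma pi_iff: "b \<in> pi_set bf A \<longleftrightarrow> (\<forall>a\<in>A. bf b a - qf bf a \<le> qf bf b)"
  unfolding pi_set_def using q_diff by auto

lemma Phi_pi: "b \<in> pi_set bf A \<Longrightarrow> Phi bf A b \<le> ereal (qf bf b)"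
  by (rule Phi_le) (simp add: pi_iff)

lemma Phi_le_pi: "Phi bf A b \<le> ereal (qf bf b) \<Longrightarrow> b \<in> pi_set bf A"
  unfolding pi_iff using Phi_ge by (meson ereal_less_eq(3) order_trans)

end

context ssdA begin

lemma key:
  assumes e: "0 < \<epsilon>"
  shows "\<exists>c. \<forall>a\<in>A. bf c (a - b) \<le> qf bf a - qf bf b + \<epsilon>"
proof (rule ccontr)
  assume "\<not> ?thesis"
  then have H: "\<And>c. \<exists>a\<in>A. qf bf a - qf bf b + \<epsilon> < bf c (a - b)" by (auto simp: not_le)
  define P where "P = (\<lambda>a. (a - b, qf bf a - qf bf b)) ` A"
  define H0 where "H0 = convex hull P"
  define K where "K = {(x,t). \<exists>s. s \<le> t \<and> (x,s) \<in> H0}"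
  define \<Psi> where "\<Psi> u v = snd u - bf (fst u) b + snd v - bf (fst v) b - bf (fst u) (fst v)"
    for u v :: "'b \<times> real"
  have \<Psi>sym: "\<Psi> u v = \<Psi> v u" for u v using sym[of "fst u" "fst v"] by (simp add: \<Psi>_def)
  have \<Psi>aff: "\<Psi> ((1-t) *\<^sub>R u + t *\<^sub>R u') v = (1-t) * \<Psi> u v + t * \<Psi> u' v" for u u' v t
    unfolding \<Psi>_def by (simp add: algebra_simps)
  have conv\<Psi>: "convex {u. 0 \<le> \<Psi> u v}" for v
    unfolding convex_alt by (auto simp: \<Psi>aff)
  have \<Psi>P: "0 \<le> \<Psi> u v" if uP: "u \<in> P" "v \<in> P" for u v
  proof -
    obtain a a' where aa: "a \<in> A" "a' \<in> A" "u = (a - b, qf bf a - qf bf b)" "v = (a' - b, qf bf a' - qf bf b)"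
      using uP unfolding P_def by auto
    have "\<Psi> u v = qf bf (a - a')"
      unfolding aa \<Psi>_def qf_def using sym[of b a'] sym[of b a] sym[of a' a] by (simp add: algebra_simps)
    then show ?thesis using qpos[OF aa(1,2)] by simp
  qed
  have step1: "H0 \<subseteq> {u. 0 \<le> \<Psi> u v}" if vP: "v \<in> P" for v
    unfolding H0_def
  proof (rule hull_minimal)
    show "P \<subseteq> {u. 0 \<le> \<Psi> u v}" using \<Psi>P vP by blast
    show "convex {u. 0 \<le> \<Psi> u v}" by (rule conv\<Psi>)
  qed
  have step2: "H0 \<subseteq> {v. 0 \<le> \<Psi> u v}" if uH: "u \<in> H0" for u
  proof -
    have "{v. 0 \<le> \<Psi> u v} = {v. 0 \<le> \<Psi> v u}" using \<Psi>sym by auto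
    then have cv: "convex {v. 0 \<le> \<Psi> u v}" using conv\<Psi> by simp
    show ?thesis unfolding H0_def
    proof (rule hull_minimal)
      show "P \<subseteq> {v. 0 \<le> \<Psi> u v}" using step1 uH \<Psi>sym unfolding H0_def by blast
      show "convex {v. 0 \<le> \<Psi> u v}" by (rule cv)
    qed
  qed
  have memK: "(X, T) \<in> K \<longleftrightarrow> (\<exists>s. s \<le> T \<and> (X, s) \<in> H0)" for X T
    unfolding K_def by simp
  have \<Psi>K: "0 \<le> t1 - bf x1 b + t2 - bf x2 b - bf x1 x2" if xK: "(x1,t1) \<in> K" "(x2,t2) \<in> K" for x1 t1 x2 t2
  proof -
    obtain s1 s2 where s: "s1 \<le> t1" "(x1,s1) \<in> H0" "s2 \<le> t2" "(x2,s2) \<in> H0"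
      using xK unfolding memK by blast
    have "0 \<le> \<Psi> (x1,s1) (x2,s2)" using step2[OF s(2)] s(4) by blast
    then show ?thesis using s unfolding \<Psi>_def by simp
  qed
  have PK: "(a - b, qf bf a - qf bf b) \<in> K" if "a \<in> A" for a
  proof -
    have "(a - b, qf bf a - qf bf b) \<in> P" unfolding P_def
      by (rule image_eqI[where x=a]) (simp_all add: that)
    then have "(a - b, qf bf a - qf bf b) \<in> H0" using hull_subset[of P convex] unfolding H0_def by blast
    then show ?thesis unfolding memK by blast
  qed
  have Kconv: "convex K"
    unfolding convex_alt
  proof (intro ballI allI impI)
    fix u v :: "'b \<times> real" and l :: real
    assume uv: "u \<in> K" "v \<in> K" and l: "0 \<le> l \<and> l \<le> 1"
    obtain x1 t1 where u1: "u = (x1,t1)" by (cases u) blast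
    obtain x2 t2 where v2: "v = (x2,t2)" by (cases v) blast
    obtain s1 s2 where s: "s1 \<le> t1" "(x1,s1) \<in> H0" "s2 \<le> t2" "(x2,s2) \<in> H0"
      using uv unfolding u1 v2 memK by blast
    have cvH: "convex H0" unfolding H0_def by (rule convex_convex_hull)
    have "(1 - l) *\<^sub>R (x1,s1) + l *\<^sub>R (x2,s2) \<in> H0"
      using convex_alt[THEN iffD1, OF cvH, rule_format, OF s(2) s(4)] l by blast
    then have hm: "((1 - l) *\<^sub>R x1 + l *\<^sub>R x2, (1 - l) * s1 + l * s2) \<in> H0" by simp
    have le: "(1 - l) * s1 + l * s2 \<le> (1 - l) * t1 + l * t2"
      using s l by (intro add_mono mult_left_mono) auto
    have "((1 - l) *\<^sub>R x1 + l *\<^sub>R x2, (1 - l) * t1 + l * t2) \<in> K"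
      unfolding memK using hm le by blast
    then show "(1 - l) *\<^sub>R u + l *\<^sub>R v \<in> K" unfolding u1 v2 by simp
  qed
  obtain a0 where a0: "a0 \<in> A" using A_ne by blast
  have Kne: "K \<noteq> {}" using PK[OF a0] by blast
  define \<delta> where "\<delta> = \<epsilon> / 6"
  have dpos: "0 < \<delta>" using e unfolding \<delta>_def by simp
  have near: "\<exists>x t. (x,t) \<in> K \<and> \<bar>bf x f\<bar> < \<delta> \<and> \<bar>bf x g\<bar> < \<delta> \<and> \<bar>t + \<epsilon>\<bar> < \<delta>" for f g
  proof (rule ccontr)
    assume nn: "\<not> ?thesis"
    define \<phi> where "\<phi> i u = (if i = (0::nat) then bf (fst u) f else if i = 1 then bf (fst u) g else snd u)"
      for i and u :: "'b \<times> real"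
    define pp where "pp i = (if i = (2::nat) then -\<epsilon> else 0)" for i
    have "\<exists>w m. 0 < m \<and> (\<forall>u\<in>K. m \<le> (\<Sum>i\<in>{0,1,2}. w i * (\<phi> i u - pp i)))"
    proof (rule gsep[OF _ Kconv Kne _ dpos])
      show "finite {0::nat,1,2}" by simp
      show "\<phi> i ((1 - t) *\<^sub>R x + t *\<^sub>R y) = (1 - t) * \<phi> i x + t * \<phi> i y" for i x y t
        unfolding \<phi>_def by (simp add: algebra_simps)
      show "\<exists>i\<in>{0,1,2}. \<delta> \<le> \<bar>\<phi> i u - pp i\<bar>" if uK: "u \<in> K" for u
      proof -
        obtain x t where u: "u = (x,t)" by (cases u)
        have "\<not> (\<bar>bf x f\<bar> < \<delta> \<and> \<bar>bf x g\<bar> < \<delta> \<and> \<bar>t + \<epsilon>\<bar> < \<delta>)" using nn uK u by blast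
        then show ?thesis unfolding \<phi>_def pp_def u by auto
      qed
    qed
    then obtain w m where m: "0 < m" and wm: "\<And>u. u \<in> K \<Longrightarrow> m \<le> (\<Sum>i\<in>{0,1,2}. w i * (\<phi> i u - pp i))"
      by blast
    define e' where "e' = w 0 *\<^sub>R f + w 1 *\<^sub>R g"
    have ws: "m \<le> bf x e' + w 2 * (t + \<epsilon>)" if "(x,t) \<in> K" for x t
      using wm[OF that] unfolding \<phi>_def pp_def e'_def by (simp add: sym[of f x] sym[of g x])
    have w2: "0 \<le> w 2"
    proof (rule ccontr)
      assume "\<not> 0 \<le> w 2"
      then have neg: "w 2 < 0" by simp
      define Z where "Z = bf (a0 - b) e' + w 2 * (qf bf a0 - qf bf b + \<epsilon>)"
      define T where "T = (\<bar>Z\<bar> + 1) / (- w 2)"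
      have T0: "0 \<le> T" unfolding T_def using neg by (intro divide_nonneg_pos) auto
      obtain s0 where s0: "s0 \<le> qf bf a0 - qf bf b" "(a0 - b, s0) \<in> H0"
        using PK[OF a0] unfolding memK by blast
      have "s0 \<le> qf bf a0 - qf bf b + T" using s0 T0 by linarith
      then have "(a0 - b, qf bf a0 - qf bf b + T) \<in> K"
        unfolding memK using s0 by blast
      from ws[OF this] have "m \<le> bf (a0 - b) e' + w 2 * (qf bf a0 - qf bf b + T + \<epsilon>)" .
      also have "\<dots> = Z + w 2 * T" unfolding Z_def by (simp add: algebra_simps)
      also have "w 2 * T = - (\<bar>Z\<bar> + 1)" unfolding T_def using neg by simp
      finally show False using m by linarith
    qed
    show False
    proof (cases "w 2 = 0")
      case False
      then have wp: "0 < w 2" using w2 by simp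
      define c where "c = (- 1 / w 2) *\<^sub>R e'"
      obtain a where a: "a \<in> A" and ha: "qf bf a - qf bf b + \<epsilon> < bf c (a - b)" using H[of c] by blast
      have hm: "m \<le> bf (a - b) e' + w 2 * (qf bf a - qf bf b + \<epsilon>)" using ws[OF PK[OF a]] by simp
      have "bf c (a - b) * w 2 = - bf (a - b) e'"
        unfolding c_def using wp sym[of e' a] sym[of e' b] by (simp add: field_simps)
      then have "(bf c (a - b) - (qf bf a - qf bf b + \<epsilon>)) * w 2 \<le> - m"
        using hm by (simp add: algebra_simps)
      moreover have "0 \<le> (bf c (a - b) - (qf bf a - qf bf b + \<epsilon>)) * w 2" using ha wp by simp
      ultimately show False using m by linarith
    next
      case True
      have hm: "m \<le> bf (a - b) e'" if "a \<in> A" for a using ws[OF PK[OF that]] True by simp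
      define s where "s = \<bar>qf bf (a0 - b)\<bar> / m"
      have s0: "0 \<le> s" unfolding s_def using m by simp
      have sm: "s * m = \<bar>qf bf (a0 - b)\<bar>" unfolding s_def using m by simp
      define c where "c = a0 - s *\<^sub>R e'"
      obtain a where a: "a \<in> A" and ha: "qf bf a - qf bf b + \<epsilon> < bf c (a - b)" using H[of c] by blast
      have "bf c (a - b) = bf a0 (a - b) - s * bf (a - b) e'"
        unfolding c_def using sym[of e' a] sym[of e' b] by (simp add: algebra_simps)
      also have "\<dots> \<le> bf a0 (a - b) - s * m" using hm[OF a] s0 by (simp add: mult_left_mono)
      finally have 1: "bf c (a - b) \<le> bf a0 (a - b) - \<bar>qf bf (a0 - b)\<bar>" using sm by simp
      have "0 \<le> qf bf (a - a0)" using qpos[OF a a0] .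
      then have 2: "bf a a0 - qf bf a0 \<le> qf bf a" using q_diff[of a a0] by simp
      have 3: "qf bf (a0 - b) = qf bf a0 - bf a0 b + qf bf b" by (rule q_diff)
      show False using 1 2 3 ha sym[of a a0] sym[of b a0] e by simp
    qed
  qed
  obtain x1 t1 where p1: "(x1,t1) \<in> K" "\<bar>bf x1 b\<bar> < \<delta>" "\<bar>t1 + \<epsilon>\<bar> < \<delta>" using near[of b b] by blast
  obtain x2 t2 where p2: "(x2,t2) \<in> K" "\<bar>bf x2 b\<bar> < \<delta>" "\<bar>bf x2 x1\<bar> < \<delta>" "\<bar>t2 + \<epsilon>\<bar> < \<delta>"
    using near[of b x1] by blast
  have "0 \<le> t1 - bf x1 b + t2 - bf x2 b - bf x1 x2" by (rule \<Psi>K[OF p1(1) p2(1)])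
  moreover have "bf x1 x2 = bf x2 x1" by (rule sym)
  ultimately show False using p1 p2 e unfolding \<delta>_def by (simp add: abs_less_iff)
qed

end

context ssdA begin

lemma conj_ge_q: "ereal (qf bf b) \<le> conj_at bf (Phi bf A) b"
proof (rule ereal_le_epsilon2)
  fix e :: real assume e: "0 < e"
  obtain c where c: "\<And>a. a \<in> A \<Longrightarrow> bf c (a - b) \<le> qf bf a - qf bf b + e" using key[OF e] by blast
  have "Phi bf A c \<le> ereal (bf c b - qf bf b + e)"
    by (rule Phi_le) (use c in force)
  from conj_ge'[OF this, of b] have h: "ereal (qf bf b - e) \<le> conj_at bf (Phi bf A) b" by simp
  show "ereal (qf bf b) \<le> conj_at bf (Phi bf A) b + ereal e"
  proof (cases "conj_at bf (Phi bf A) b")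
    case (real r) then show ?thesis using h by simp
  next
    case PInf then show ?thesis by simp
  next
    case MInf then show ?thesis using h by simp
  qed
qed

lemma Pq_pi:
  assumes hb: "conj_at bf (Phi bf A) b = ereal (qf bf b)"
  shows "b \<in> pi_set bf A"
  unfolding pi_set_def
proof (intro CollectI ballI)
  fix a assume a: "a \<in> A"
  define m where "m = (1/2) *\<^sub>R a + (1/2::real) *\<^sub>R b"
  have "conj_at bf (Phi bf A) m \<le> ereal ((qf bf a + qf bf b)/2)"
  proof (rule conj_le_gen)
    fix c r assume r: "Phi bf A c = ereal r"
    have 1: "bf c a - r \<le> qf bf a" using Phi_realD[OF r a] by simp
    have "ereal (bf c b - r) \<le> conj_at bf (Phi bf A) b" using conj_ge'[of c r b] r by simp
    then have 2: "bf c b - r \<le> qf bf b" using hb by simp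
    have "bf c m = (bf c a + bf c b) / 2" unfolding m_def by simp
    then show "bf c m - r \<le> (qf bf a + qf bf b) / 2" using 1 2 by simp
  qed
  moreover have "ereal (qf bf m) \<le> conj_at bf (Phi bf A) m" by (rule conj_ge_q)
  ultimately have "ereal (qf bf m) \<le> ereal ((qf bf a + qf bf b) / 2)" by (meson order_trans)
  then have "qf bf m \<le> (qf bf a + qf bf b) / 2" by simp
  then show "0 \<le> qf bf (b - a)"
    unfolding m_def qf_def using sym[of a b] by (simp add: algebra_simps)
qed

lemma unbounded:
  assumes m: "0 < m" and hm: "\<And>a. a \<in> A \<Longrightarrow> m \<le> bf (a - b) e"
  shows "conj_at bf (Phi bf A) b = \<infinity>"
proof -
  obtain a0 where a0: "a0 \<in> A" using A_ne by blast
  have big: "ereal R \<le> conj_at bf (Phi bf A) b" for R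
  proof -
    define s where "s = (\<bar>R\<bar> + \<bar>bf a0 b - qf bf a0\<bar>) / m"
    have s0: "0 \<le> s" unfolding s_def using m by simp
    have sm: "s * m = \<bar>R\<bar> + \<bar>bf a0 b - qf bf a0\<bar>" unfolding s_def using m by simp
    define c where "c = a0 - s *\<^sub>R e"
    have "Phi bf A c \<le> ereal (qf bf a0 - s * m - s * bf e b)"
    proof (rule Phi_le)
      fix a assume a: "a \<in> A"
      have 1: "m + bf e b \<le> bf e a" using hm[OF a] sym[of a e] sym[of b e] by simp
      have "0 \<le> qf bf (a - a0)" using qpos[OF a a0] .
      then have 2: "bf a a0 - qf bf a0 \<le> qf bf a" using q_diff[of a a0] by simp
      have 3: "s * (m + bf e b) \<le> s * bf e a" using 1 s0 by (rule mult_left_mono)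
      show "bf c a - qf bf a \<le> qf bf a0 - s * m - s * bf e b"
        unfolding c_def using 2 3 sym[of a a0] by (simp add: algebra_simps)
    qed
    from conj_ge'[OF this, of b]
    have c1: "ereal (bf c b - (qf bf a0 - s * m - s * bf e b)) \<le> conj_at bf (Phi bf A) b" .
    have "bf c b - (qf bf a0 - s * m - s * bf e b) = bf a0 b - qf bf a0 + s * m"
      unfolding c_def by (simp add: algebra_simps)
    moreover have "R \<le> bf a0 b - qf bf a0 + s * m" using sm by linarith
    ultimately have "ereal R \<le> ereal (bf c b - (qf bf a0 - s * m - s * bf e b))" by simp
    then show ?thesis using c1 by (rule order_trans)
  qed
  show ?thesis
  proof (cases "conj_at bf (Phi bf A) b")
    case (real r) then show ?thesis using big[of "r + 1"] by simp
  next
    case PInf then show ?thesis .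
  next
    case MInf then show ?thesis using big[of 0] by simp
  qed
qed

end

lemma box_gen:
  fixes bf :: "'b \<Rightarrow> 'b \<Rightarrow> real"
  assumes "generate_topology_on {{b. bf b c \<in> U} | c U. open U} V"
  shows "\<forall>b\<in>V. \<exists>C \<delta>. finite C \<and> 0 < \<delta> \<and> {x. \<forall>c\<in>C. \<bar>bf x c - bf b c\<bar> < \<delta>} \<subseteq> V"
  using assms
proof (induction rule: generate_topology_on.induct)
  case Empty then show ?case by simp
next
  case (Int a b')
  show ?case
  proof
    fix b assume b: "b \<in> a \<inter> b'"
    obtain C1 d1 where 1: "finite C1" "0 < d1" "{x. \<forall>c\<in>C1. \<bar>bf x c - bf b c\<bar> < d1} \<subseteq> a"
      using Int.IH(1) b by blast
    obtain C2 d2 where 2: "finite C2" "0 < d2" "{x. \<forall>c\<in>C2. \<bar>bf x c - bf b c\<bar> < d2} \<subseteq> b'"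
      using Int.IH(2) b by blast
    have "{x. \<forall>c\<in>C1 \<union> C2. \<bar>bf x c - bf b c\<bar> < min d1 d2} \<subseteq> {x. \<forall>c\<in>C1. \<bar>bf x c - bf b c\<bar> < d1}"
    proof (intro subsetI CollectI ballI)
      fix x c assume "x \<in> {x. \<forall>c\<in>C1 \<union> C2. \<bar>bf x c - bf b c\<bar> < min d1 d2}" "c \<in> C1"
      then have "\<bar>bf x c - bf b c\<bar> < min d1 d2" by blast
      then show "\<bar>bf x c - bf b c\<bar> < d1" by (metis min_less_iff_conj)
    qed
    moreover have "{x. \<forall>c\<in>C1 \<union> C2. \<bar>bf x c - bf b c\<bar> < min d1 d2} \<subseteq> {x. \<forall>c\<in>C2. \<bar>bf x c - bf b c\<bar> < d2}"
    proof (intro subsetI CollectI ballI)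
      fix x c assume "x \<in> {x. \<forall>c\<in>C1 \<union> C2. \<bar>bf x c - bf b c\<bar> < min d1 d2}" "c \<in> C2"
      then have "\<bar>bf x c - bf b c\<bar> < min d1 d2" by blast
      then show "\<bar>bf x c - bf b c\<bar> < d2" by (metis min_less_iff_conj)
    qed
    ultimately have "{x. \<forall>c\<in>C1 \<union> C2. \<bar>bf x c - bf b c\<bar> < min d1 d2} \<subseteq> a \<inter> b'"
      using 1(3) 2(3) by blast
    then show "\<exists>C \<delta>. finite C \<and> 0 < \<delta> \<and> {x. \<forall>c\<in>C. \<bar>bf x c - bf b c\<bar> < \<delta>} \<subseteq> a \<inter> b'"
      using 1 2 by (intro exI[of _ "C1 \<union> C2"] exI[of _ "min d1 d2"]) auto
  qed
next
  case (UN K)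
  show ?case
  proof
    fix b assume "b \<in> \<Union>K"
    then obtain k where k: "k \<in> K" "b \<in> k" by blast
    then obtain C d where Cd: "finite C" "0 < d" "{x. \<forall>c\<in>C. \<bar>bf x c - bf b c\<bar> < d} \<subseteq> k"
      using UN.IH by blast
    have "{x. \<forall>c\<in>C. \<bar>bf x c - bf b c\<bar> < d} \<subseteq> \<Union>K" using Cd(3) k(1) by blast
    then show "\<exists>C \<delta>. finite C \<and> 0 < \<delta> \<and> {x. \<forall>c\<in>C. \<bar>bf x c - bf b c\<bar> < \<delta>} \<subseteq> \<Union>K"
      using Cd(1,2) by (intro exI[of _ C] exI[of _ d]) auto
  qed
next
  case (Basis s)
  then obtain c U where s: "s = {b. bf b c \<in> U}" "open U" by blast
  show ?case
  proof
    fix b assume "b \<in> s"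
    then have "bf b c \<in> U" using s by simp
    then obtain d where d: "0 < d" "\<And>y. dist y (bf b c) < d \<Longrightarrow> y \<in> U"
      using s(2) unfolding open_dist by blast
    have "{x. \<forall>c'\<in>{c}. \<bar>bf x c' - bf b c'\<bar> < d} \<subseteq> s"
      using d(2) s(1) by (auto simp: dist_real_def)
    then show "\<exists>C \<delta>. finite C \<and> 0 < \<delta> \<and> {x. \<forall>c\<in>C. \<bar>bf x c - bf b c\<bar> < \<delta>} \<subseteq> s"
      using d(1) by (intro exI[of _ "{c}"] exI[of _ d]) auto
  qed
qed

context ssdA begin

lemma closure_mem:
  assumes fin: "conj_at bf (Phi bf A) b \<noteq> \<infinity>"
  shows "b \<in> conv_w bf A"
  unfolding conv_w_def in_closure_of
proof (intro conjI allI impI)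
  show "b \<in> topspace (weak_top bf)"
    unfolding weak_top_def topology_generated_by_topspace
    by (rule UnionI[of "{x. bf x b \<in> UNIV}"]) auto
  fix T assume T: "b \<in> T \<and> openin (weak_top bf) T"
  then obtain C \<delta> where C: "finite C" "0 < \<delta>" "{x. \<forall>c\<in>C. \<bar>bf x c - bf b c\<bar> < \<delta>} \<subseteq> T"
    using box_gen[of bf T] unfolding weak_top_def openin_topology_generated_by_iff by blast
  show "\<exists>y. y \<in> convex hull A \<and> y \<in> T"
  proof (rule ccontr)
    assume "\<not> ?thesis"
    then have away: "\<exists>c\<in>C. \<delta> \<le> \<bar>bf x c - bf b c\<bar>" if "x \<in> convex hull A" for x
      using that C(3) by (force simp: not_less)
    have "\<exists>w m. 0 < m \<and> (\<forall>x\<in>convex hull A. m \<le> (\<Sum>c\<in>C. w c * (bf x c - bf b c)))"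
    proof (rule gsep[OF C(1) convex_convex_hull _ _ C(2)])
      show "convex hull A \<noteq> {}" using A_ne by simp
      show "bf ((1 - t) *\<^sub>R x + t *\<^sub>R y) c = (1 - t) * bf x c + t * bf y c" for c x y t by simp
      show "\<exists>c\<in>C. \<delta> \<le> \<bar>bf x c - bf b c\<bar>" if "x \<in> convex hull A" for x using away[OF that] .
    qed
    then obtain w m where m: "0 < m" and wm: "\<And>x. x \<in> convex hull A \<Longrightarrow> m \<le> (\<Sum>c\<in>C. w c * (bf x c - bf b c))"
      by blast
    define e where "e = (\<Sum>c\<in>C. w c *\<^sub>R c)"
    have "m \<le> bf (a - b) e" if a: "a \<in> A" for a
    proof -
      have "a \<in> convex hull A" using a hull_subset[of A convex] by blast
      from wm[OF this] have "m \<le> (\<Sum>c\<in>C. w c * (bf (a - b) c))" by simp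
      also have "\<dots> = bf (a - b) e" unfolding e_def rsum[OF C(1)] ..
      finally show ?thesis .
    qed
    from unbounded[OF m this] fin show False by simp
  qed
qed

end

theorem mainTheorem7:
  fixes bf :: "'b::real_vector \<Rightarrow> 'b \<Rightarrow> real" and A :: "'b set"
  assumes "SSD_space bf" and "q_positive bf A"
  shows "(A \<subseteq> P_q bf (conj_at bf (Phi bf A))
       \<and> P_q bf (conj_at bf (Phi bf A)) \<subseteq> G_set bf (Phi bf A)
       \<and> G_set bf (Phi bf A) \<subseteq> pi_set bf A \<inter> conv_w bf A)
       \<and> (convex A \<and> closedin (weak_top bf) A \<longrightarrow> A = G_set bf (Phi bf A))
       \<and> (max_q_positive bf A \<longrightarrow> A = G_set bf (Phi bf A))"
proof -
  interpret ssdA bf A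
    using assms unfolding SSD_space_def by unfold_locales auto
  have s1: "A \<subseteq> P_q bf (conj_at bf (Phi bf A))"
  proof
    fix a assume a: "a \<in> A"
    have "conj_at bf (Phi bf A) a = ereal (qf bf a)"
      using conj_le_A[OF a] conj_ge_q[of a] by simp
    then show "a \<in> P_q bf (conj_at bf (Phi bf A))" unfolding P_q_def by simp
  qed
  have s2: "P_q bf (conj_at bf (Phi bf A)) \<subseteq> G_set bf (Phi bf A)"
  proof
    fix b assume "b \<in> P_q bf (conj_at bf (Phi bf A))"
    then have hb: "conj_at bf (Phi bf A) b = ereal (qf bf b)" unfolding P_q_def by simp
    have pb: "b \<in> pi_set bf A" by (rule Pq_pi[OF hb])
    have le: "Phi bf A b \<le> ereal (qf bf b)" by (rule Phi_pi[OF pb])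
    then obtain r where r: "Phi bf A b = ereal r" "r \<le> qf bf b"
      using Phi_not_minf by (cases "Phi bf A b") auto
    have "ereal (bf b b) - Phi bf A b \<le> conj_at bf (Phi bf A) b" by (rule conj_ge)
    then have "bf b b - r \<le> qf bf b" using r hb by simp
    then have "r = qf bf b" using r(2) unfolding qf_def by simp
    then show "b \<in> G_set bf (Phi bf A)" unfolding G_set_def using r hb by (simp add: qf_def)
  qed
  have s3: "G_set bf (Phi bf A) \<subseteq> pi_set bf A \<inter> conv_w bf A"
  proof
    fix b assume "b \<in> G_set bf (Phi bf A)"
    then have hb: "Phi bf A b + conj_at bf (Phi bf A) b = ereal (bf b b)" unfolding G_set_def by simp
    have cq: "ereal (qf bf b) \<le> conj_at bf (Phi bf A) b" by (rule conj_ge_q)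
    obtain r where r: "Phi bf A b = ereal r"
      using Phi_not_minf hb by (cases "Phi bf A b") auto
    obtain s where s: "conj_at bf (Phi bf A) b = ereal s"
      using cq hb r by (cases "conj_at bf (Phi bf A) b") auto
    have "r + s = bf b b" using hb r s by simp
    moreover have "qf bf b \<le> s" using cq s by simp
    ultimately have "r \<le> qf bf b" unfolding qf_def by simp
    then have "b \<in> pi_set bf A" using Phi_le_pi r by simp
    moreover have "b \<in> conv_w bf A" using closure_mem s by simp
    ultimately show "b \<in> pi_set bf A \<inter> conv_w bf A" by blast
  qed
  have s4: "convex A \<and> closedin (weak_top bf) A \<longrightarrow> A = G_set bf (Phi bf A)"
  proof
    assume h: "convex A \<and> closedin (weak_top bf) A"
    have "conv_w bf A = A" unfolding conv_w_def
      using h convex_hull_eq[of A] closure_of_closedin[of "weak_top bf" A] by simp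
    then show "A = G_set bf (Phi bf A)" using s1 s2 s3 by blast
  qed
  have s5: "max_q_positive bf A \<longrightarrow> A = G_set bf (Phi bf A)"
  proof
    assume h: "max_q_positive bf A"
    have "G_set bf (Phi bf A) \<subseteq> A"
    proof
      fix b assume "b \<in> G_set bf (Phi bf A)"
      then have pb: "b \<in> pi_set bf A" using s3 by blast
      have "q_positive bf (insert b A)"
        unfolding q_positive_def
      proof (intro conjI ballI)
        show "insert b A \<noteq> {}" by simp
        fix x y assume xy: "x \<in> insert b A" "y \<in> insert b A"
        have qneg: "qf bf (u - v) = qf bf (v - u)" for u v
          using q_diff[of u v] q_diff[of v u] sym[of u v] by simp
        show "0 \<le> qf bf (x - y)"
        proof (cases "x = b")
          case True
          then show ?thesis
          proof (cases "y = b")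
            case True then show ?thesis using \<open>x = b\<close> by (simp add: qf_def)
          next
            case False then have "y \<in> A" using xy by simp
            then show ?thesis using pb \<open>x = b\<close> unfolding pi_set_def by simp
          qed
        next
          case False then have xA: "x \<in> A" using xy by simp
          show ?thesis
          proof (cases "y = b")
            case True then show ?thesis using pb xA qneg[of x b] unfolding pi_set_def by simp
          next
            case False then have "y \<in> A" using xy by simp
            then show ?thesis using qpos xA by simp
          qed
        qed
      qed
      then have "insert b A = A" using h unfolding max_q_positive_def by blast
      then show "b \<in> A" by blast
    qed
    then show "A = G_set bf (Phi bf A)" using s1 s2 by blast
  qed
  show ?thesis using s1 s2 s3 s4 s5 by blast
qed
end
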